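(* Let $(E,P,\vartheta)$ be a complete bipolar metric space and let $F\colon E\cup P\to E\cup P$ be a covariant mapping which is a polynomial contraction, i.e. there exist $\pi\in(0,1)$, an integer $\sigma\geq 1$ and functions $q_\upsilon\colon E\times P\to[0,\infty)$, $\upsilon=0,\dots,\sigma$, such that $$\sum_{\upsilon=0}^{\sigma} q_\upsilon(Fe,Ff)\,\vartheta^\upsilon(Fe,Ff)\leq \pi\sum_{\upsilon=0}^{\sigma} q_\upsilon(e,f)\,\vartheta^\upsilon(e,f)\quad\text{for all } e\in E,\ f\in P.$$ Assume moreover that (i) $F$ is continuous, and (ii) there exist $\varrho\in\{1,\dots,\sigma\}$ and $Q_\varrho>0$ such that $q_\varrho(e,f)\geq Q_\varrho$ for all $e\in E$, $f\in P$. Then $F$ has a unique fixed point.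
   Context: A bipolar metric space is a triple $(E,P,\vartheta)$ where $E,P$ are nonempty sets and $\vartheta\colon E\times P\to[0,\infty)$ satisfies: (1) for $e\in E$, $f\in P$, $\vartheta(e,f)=0$ iff $e=f$; (2) $\vartheta(e,f)=\vartheta(f,e)$ whenever $e,f\in E\cap P$; (3) $\vartheta(e,f)\leq\vartheta(e,z)+\vartheta(r,z)+\vartheta(r,f)$ for all $e,r\in E$, $z,f\in P$. A sequence $(x_n)$ in $E$ converges to $y\in P$ if $\vartheta(x_n,y)\to0$; a sequence $(y_n)$ in $P$ converges to $x\in E$ if $\vartheta(x,y_n)\to 0$. A bisequence $(x_n,y_n)$ with $x_n\in E$, $y_n\in P$ is convergent if both $(x_n)$ and $(y_n)$ converge, biconvergent if they converge to the same point, and Cauchy if for every $\varepsilon>0$ there is $N$ with $\vartheta(x_n,y_m)<\varepsilon$ for all $n,m\geq N$. The space is complete if every Cauchy bisequence is convergent. A map $F\colon E\cup P\to E\cup P$ is covariant if $F(E)\subseteq E$ and $F(P)\subseteq P$. $F$ is continuous if whenever a sequence $(u_n)$ (in $E$ or in $P$) converges to a point $v$, the sequence $(Fu_n)$ converges to $Fv$. $\vartheta^\upsilon$ denotes the $\upsilon$-th power of $\vartheta$, with $\vartheta^0\equiv 1$. A fixed point of $F$ is a point $g$ with $Fg=g$. *)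

theory Defs
  imports Complex_Main
begin

definition bipolar_metric_space :: "'a set \<Rightarrow> 'a set \<Rightarrow> ('a \<Rightarrow> 'a \<Rightarrow> real) \<Rightarrow> bool" where
  "bipolar_metric_space E P d \<longleftrightarrow>
     E \<noteq> {} \<and> P \<noteq> {} \<and>
     (\<forall>e\<in>E. \<forall>f\<in>P. d e f \<ge> 0) \<and>
     (\<forall>e\<in>E. \<forall>f\<in>P. d e f = 0 \<longleftrightarrow> e = f) \<and>
     (\<forall>e\<in>E \<inter> P. \<forall>f\<in>E \<inter> P. d e f = d f e) \<and>
     (\<forall>e\<in>E. \<forall>r\<in>E. \<forall>z\<in>P. \<forall>f\<in>P. d e f \<le> d e z + d r z + d r f)"

definition conv_left :: "'a set \<Rightarrow> 'a set \<Rightarrow> ('a \<Rightarrow> 'a \<Rightarrow> real) \<Rightarrow> (nat \<Rightarrow> 'a) \<Rightarrow> 'a \<Rightarrow> bool" where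
  "conv_left E P d x y \<longleftrightarrow> (\<forall>n. x n \<in> E) \<and> y \<in> P \<and> (\<lambda>n. d (x n) y) \<longlonglongrightarrow> 0"

definition conv_right :: "'a set \<Rightarrow> 'a set \<Rightarrow> ('a \<Rightarrow> 'a \<Rightarrow> real) \<Rightarrow> (nat \<Rightarrow> 'a) \<Rightarrow> 'a \<Rightarrow> bool" where
  "conv_right E P d y x \<longleftrightarrow> (\<forall>n. y n \<in> P) \<and> x \<in> E \<and> (\<lambda>n. d x (y n)) \<longlonglongrightarrow> 0"

definition cauchy_bisequence :: "'a set \<Rightarrow> 'a set \<Rightarrow> ('a \<Rightarrow> 'a \<Rightarrow> real) \<Rightarrow> (nat \<Rightarrow> 'a) \<Rightarrow> (nat \<Rightarrow> 'a) \<Rightarrow> bool" where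
  "cauchy_bisequence E P d x y \<longleftrightarrow> (\<forall>n. x n \<in> E) \<and> (\<forall>n. y n \<in> P) \<and>
     (\<forall>\<epsilon>>0. \<exists>N. \<forall>n\<ge>N. \<forall>m\<ge>N. d (x n) (y m) < \<epsilon>)"

definition convergent_bisequence :: "'a set \<Rightarrow> 'a set \<Rightarrow> ('a \<Rightarrow> 'a \<Rightarrow> real) \<Rightarrow> (nat \<Rightarrow> 'a) \<Rightarrow> (nat \<Rightarrow> 'a) \<Rightarrow> bool" where
  "convergent_bisequence E P d x y \<longleftrightarrow> (\<exists>v. conv_left E P d x v) \<and> (\<exists>u. conv_right E P d y u)"

definition complete_bipolar :: "'a set \<Rightarrow> 'a set \<Rightarrow> ('a \<Rightarrow> 'a \<Rightarrow> real) \<Rightarrow> bool" where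
  "complete_bipolar E P d \<longleftrightarrow>
     (\<forall>x y. cauchy_bisequence E P d x y \<longrightarrow> convergent_bisequence E P d x y)"

definition covariant :: "'a set \<Rightarrow> 'a set \<Rightarrow> ('a \<Rightarrow> 'a) \<Rightarrow> bool" where
  "covariant E P F \<longleftrightarrow> F ` E \<subseteq> E \<and> F ` P \<subseteq> P"

definition bipolar_continuous :: "'a set \<Rightarrow> 'a set \<Rightarrow> ('a \<Rightarrow> 'a \<Rightarrow> real) \<Rightarrow> ('a \<Rightarrow> 'a) \<Rightarrow> bool" where
  "bipolar_continuous E P d F \<longleftrightarrow>
     (\<forall>u v. conv_left E P d u v \<longrightarrow> conv_left E P d (\<lambda>n. F (u n)) (F v)) \<and>
     (\<forall>u v. conv_right E P d u v \<longrightarrow> conv_right E P d (\<lambda>n. F (u n)) (F v))"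

end

theory Submission
  imports Defs
begin

theorem theorem3p2:
  fixes E P :: "'a set" and d :: "'a \<Rightarrow> 'a \<Rightarrow> real" and F :: "'a \<Rightarrow> 'a"
    and \<pi> :: real and \<sigma> :: nat and q :: "nat \<Rightarrow> 'a \<Rightarrow> 'a \<Rightarrow> real"
    and \<rho> :: nat and Q :: real
  assumes "bipolar_metric_space E P d"
    and "complete_bipolar E P d"
    and "covariant E P F"
    and "0 < \<pi>" and "\<pi> < 1" and "\<sigma> \<ge> 1"
    and "\<And>v e f. v \<le> \<sigma> \<Longrightarrow> e \<in> E \<Longrightarrow> f \<in> P \<Longrightarrow> q v e f \<ge> 0"
    and "\<And>e f. e \<in> E \<Longrightarrow> f \<in> P \<Longrightarrow>
           (\<Sum>v=0..\<sigma>. q v (F e) (F f) * d (F e) (F f) ^ v)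
             \<le> \<pi> * (\<Sum>v=0..\<sigma>. q v e f * d e f ^ v)"
    and "bipolar_continuous E P d F"
    and "1 \<le> \<rho>" and "\<rho> \<le> \<sigma>" and "Q > 0"
    and "\<And>e f. e \<in> E \<Longrightarrow> f \<in> P \<Longrightarrow> q \<rho> e f \<ge> Q"
  shows "\<exists>!g. g \<in> E \<union> P \<and> F g = g"
proof -
  note bm = assms(1)[unfolded bipolar_metric_space_def]
  have dnn: "\<And>e f. e \<in> E \<Longrightarrow> f \<in> P \<Longrightarrow> d e f \<ge> 0" using bm by blast
  have d0: "\<And>e f. e \<in> E \<Longrightarrow> f \<in> P \<Longrightarrow> d e f = 0 \<longleftrightarrow> e = f" using bm by blast
  have quad: "\<And>e r z f. e \<in> E \<Longrightarrow> r \<in> E \<Longrightarrow> z \<in> P \<Longrightarrow> f \<in> P \<Longrightarrow>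
      d e f \<le> d e z + d r z + d r f" using bm by blast
  have FE: "\<And>e. e \<in> E \<Longrightarrow> F e \<in> E" and FP: "\<And>f. f \<in> P \<Longrightarrow> F f \<in> P"
    using assms(3) unfolding covariant_def by auto
  have FnE: "\<And>e n. e \<in> E \<Longrightarrow> (F^^n) e \<in> E"
  proof -
    fix e n assume "e \<in> E" then show "(F^^n) e \<in> E" by (induction n) (auto intro: FE)
  qed
  have FnP: "\<And>e n. e \<in> P \<Longrightarrow> (F^^n) e \<in> P"
  proof -
    fix e n assume "e \<in> P" then show "(F^^n) e \<in> P" by (induction n) (auto intro: FP)
  qed
  define S where "S = (\<lambda>e f. \<Sum>v=0..\<sigma>. q v e f * d e f ^ v)"
  have Snn: "\<And>e f. e \<in> E \<Longrightarrow> f \<in> P \<Longrightarrow> S e f \<ge> 0"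
    unfolding S_def using assms(7) dnn by (auto intro!: sum_nonneg)
  have Slow: "\<And>e f. e \<in> E \<Longrightarrow> f \<in> P \<Longrightarrow> Q * d e f ^ \<rho> \<le> S e f"
  proof -
    fix e f assume ef: "e \<in> E" "f \<in> P"
    have "Q * d e f ^ \<rho> \<le> q \<rho> e f * d e f ^ \<rho>"
      using assms(13)[OF ef] dnn[OF ef] by (simp add: mult_right_mono)
    also have "\<dots> \<le> S e f" unfolding S_def
      using assms(7) dnn[OF ef] ef assms(11)
      by (intro member_le_sum) auto
    finally show "Q * d e f ^ \<rho> \<le> S e f" .
  qed
  have Sit: "\<And>e f n. e \<in> E \<Longrightarrow> f \<in> P \<Longrightarrow> S ((F^^n) e) ((F^^n) f) \<le> \<pi>^n * S e f"
  proof -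
    fix e f n assume ef: "e \<in> E" "f \<in> P"
    show "S ((F^^n) e) ((F^^n) f) \<le> \<pi>^n * S e f"
    proof (induction n)
      case 0 then show ?case by simp
    next
      case (Suc n)
      have "S ((F^^Suc n) e) ((F^^Suc n) f) \<le> \<pi> * S ((F^^n) e) ((F^^n) f)"
        using assms(8)[OF FnE[OF ef(1)] FnP[OF ef(2)]] by (simp add: S_def)
      also have "\<dots> \<le> \<pi> * (\<pi>^n * S e f)" using Suc assms(4) by simp
      finally show ?case by simp
    qed
  qed
  have rpos: "0 < \<rho>" using assms(10) by simp
  define lam where "lam = root \<rho> \<pi>"
  have lam0: "0 < lam" unfolding lam_def using assms(4) rpos by simp
  have lam1: "lam < 1" unfolding lam_def using assms(5) rpos real_root_lt_1_iff by blast
  define K where "K = (\<lambda>e f. root \<rho> (S e f / Q))"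
  have Knn: "\<And>e f. e \<in> E \<Longrightarrow> f \<in> P \<Longrightarrow> K e f \<ge> 0"
    unfolding K_def using Snn assms(12) by (simp add: real_root_ge_zero)
  have dbound: "\<And>e f n. e \<in> E \<Longrightarrow> f \<in> P \<Longrightarrow> d ((F^^n) e) ((F^^n) f) \<le> K e f * lam^n"
  proof -
    fix e f n assume ef: "e \<in> E" "f \<in> P"
    define a where "a = d ((F^^n) e) ((F^^n) f)"
    have a0: "a \<ge> 0" unfolding a_def using dnn FnE FnP ef by blast
    have "Q * a^\<rho> \<le> \<pi>^n * S e f" unfolding a_def
      using Slow[OF FnE[OF ef(1)] FnP[OF ef(2)], of n n] Sit[OF ef, of n] by linarith
    then have "a^\<rho> \<le> \<pi>^n * (S e f / Q)" using assms(12)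
      by (simp add: field_simps mult.commute)
    then have "root \<rho> (a^\<rho>) \<le> root \<rho> (\<pi>^n * (S e f / Q))"
      using rpos real_root_le_mono by blast
    also have "\<dots> = lam^n * K e f"
      unfolding lam_def K_def real_root_mult real_root_power[OF rpos] ..
    finally show "d ((F^^n) e) ((F^^n) f) \<le> K e f * lam^n"
      using real_root_pos2[OF rpos a0] a_def by (simp add: mult.commute)
  qed
  obtain e0 where e0: "e0 \<in> E" using bm by blast
  obtain f0 where f0: "f0 \<in> P" using bm by blast
  define x where "x = (\<lambda>n. (F^^n) e0)"
  define y where "y = (\<lambda>n. (F^^n) f0)"
  have xE: "\<And>n. x n \<in> E" unfolding x_def using FnE e0 by blast
  have yP: "\<And>n. y n \<in> P" unfolding y_def using FnP f0 by blast
  define A where "A = K e0 f0 + K e0 (F f0) + K (F e0) f0"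
  have A0: "A \<ge> 0" unfolding A_def using Knn e0 f0 FE FP by (simp add: add_nonneg_nonneg)
  have b1: "\<And>n. d (x n) (y n) \<le> A * lam^n"
  proof -
    fix n
    have "d (x n) (y n) \<le> K e0 f0 * lam^n" unfolding x_def y_def using dbound e0 f0 by blast
    also have "\<dots> \<le> A * lam^n" using Knn e0 f0 FE FP lam0
      by (intro mult_right_mono) (auto simp: A_def)
    finally show "d (x n) (y n) \<le> A * lam^n" .
  qed
  have b2: "\<And>n. d (x n) (y (Suc n)) \<le> A * lam^n"
  proof -
    fix n
    have "y (Suc n) = (F^^n) (F f0)" unfolding y_def by (simp add: funpow_Suc_right del: funpow.simps)
    then have "d (x n) (y (Suc n)) \<le> K e0 (F f0) * lam^n" unfolding x_def using dbound e0 f0 FP by metis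
    also have "\<dots> \<le> A * lam^n" using Knn e0 f0 FE FP lam0
      by (intro mult_right_mono) (auto simp: A_def)
    finally show "d (x n) (y (Suc n)) \<le> A * lam^n" .
  qed
  have b3: "\<And>n. d (x (Suc n)) (y n) \<le> A * lam^n"
  proof -
    fix n
    have "x (Suc n) = (F^^n) (F e0)" unfolding x_def by (simp add: funpow_Suc_right del: funpow.simps)
    then have "d (x (Suc n)) (y n) \<le> K (F e0) f0 * lam^n" unfolding y_def using dbound e0 f0 FE by metis
    also have "\<dots> \<le> A * lam^n" using Knn e0 f0 FE FP lam0
      by (intro mult_right_mono) (auto simp: A_def)
    finally show "d (x (Suc n)) (y n) \<le> A * lam^n" .
  qed
  have geo: "\<And>n. 2*A*lam^n + 2*A*lam^(Suc n)/(1-lam) = 2*A*lam^n/(1-lam)"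
    using lam1 by (simp add: field_simps)
  have c1: "d (x n) (y (n+k)) \<le> 2*A*lam^n/(1-lam) + A*lam^(n+k)" for k n
  proof (induction k arbitrary: n)
    case 0
    have "0 \<le> 2*A*lam^n/(1-lam)" using A0 lam0 lam1 by simp
    then show ?case using b1[of n] by simp
  next
    case (Suc k)
    have "d (x n) (y (n + Suc k)) \<le> d (x n) (y (Suc n)) + d (x (Suc n)) (y (Suc n)) + d (x (Suc n)) (y (Suc n + k))"
      using quad xE yP by simp
    also have "\<dots> \<le> A*lam^n + A*lam^(Suc n) + (2*A*lam^(Suc n)/(1-lam) + A*lam^(Suc n+k))"
      using b2[of n] b1[of "Suc n"] Suc[of "Suc n"] by linarith
    also have "\<dots> \<le> 2*A*lam^n/(1-lam) + A*lam^(n + Suc k)"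
    proof -
      have "A*lam^(Suc n) \<le> A*lam^n" using A0 lam0 lam1
        by (intro mult_left_mono) (auto intro: power_decreasing)
      then show ?thesis using geo[of n] by simp
    qed
    finally show ?case .
  qed
  have c2: "d (x (n+k)) (y n) \<le> 2*A*lam^n/(1-lam) + A*lam^(n+k)" for k n
  proof (induction k arbitrary: n)
    case 0
    have "0 \<le> 2*A*lam^n/(1-lam)" using A0 lam0 lam1 by simp
    then show ?case using b1[of n] by simp
  next
    case (Suc k)
    have "d (x (n + Suc k)) (y n) \<le> d (x (Suc n + k)) (y (Suc n)) + d (x (Suc n)) (y (Suc n)) + d (x (Suc n)) (y n)"
      using quad xE yP by simp
    also have "\<dots> \<le> (2*A*lam^(Suc n)/(1-lam) + A*lam^(Suc n+k)) + A*lam^(Suc n) + A*lam^n"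
      using b3[of n] b1[of "Suc n"] Suc[of "Suc n"] by linarith
    also have "\<dots> \<le> 2*A*lam^n/(1-lam) + A*lam^(n + Suc k)"
    proof -
      have "A*lam^(Suc n) \<le> A*lam^n" using A0 lam0 lam1
        by (intro mult_left_mono) (auto intro: power_decreasing)
      then show ?thesis using geo[of n] by simp
    qed
    finally show ?case .
  qed
  define B where "B = 3*A/(1-lam)"
  have B0: "B \<ge> 0" unfolding B_def using A0 lam1 by simp
  have cb: "\<And>n m. d (x n) (y m) \<le> B * lam^(min n m)"
  proof -
    fix n m
    have gen: "2*A*lam^j/(1-lam) + A*lam^(j+k) \<le> B*lam^j" for j k
    proof -
      have "A*lam^(j+k) \<le> A*lam^j" using A0 lam0 lam1
        by (intro mult_left_mono) (auto intro: power_decreasing)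
      also have "\<dots> \<le> A*lam^j/(1-lam)" using A0 lam0 lam1
        by (simp add: field_simps)
      finally have h: "A*lam^(j+k) \<le> A*lam^j/(1-lam)" .
      have "B*lam^j = 2*A*lam^j/(1-lam) + A*lam^j/(1-lam)"
        unfolding B_def by (simp add: add_divide_distrib[symmetric] algebra_simps)
      then show ?thesis using h by linarith
    qed
    show "d (x n) (y m) \<le> B * lam^(min n m)"
    proof (cases "n \<le> m")
      case True
      then obtain k where "m = n + k" using le_Suc_ex by blast
      then show ?thesis using c1[of n k] gen[of n k] True by simp
    next
      case False
      then obtain k where "n = m + k" by (metis le_Suc_ex nat_le_linear)
      then show ?thesis using c2[of m k] gen[of m k] False by simp
    qed
  qed
  have lamlim: "(\<lambda>n. B * lam^n) \<longlonglongrightarrow> 0"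
    using lam0 lam1 by (intro tendsto_mult_right_zero LIMSEQ_power_zero) auto
  have cauchy: "cauchy_bisequence E P d x y"
    unfolding cauchy_bisequence_def
  proof (intro conjI allI impI)
    fix \<epsilon> :: real assume "\<epsilon> > 0"
    then obtain N where N: "\<And>n. n \<ge> N \<Longrightarrow> \<bar>B * lam^n\<bar> < \<epsilon>"
      using lamlim unfolding LIMSEQ_def dist_real_def by auto
    show "\<exists>N. \<forall>n\<ge>N. \<forall>m\<ge>N. d (x n) (y m) < \<epsilon>"
    proof (intro exI allI impI)
      fix n m assume "n \<ge> N" "m \<ge> N"
      then have "\<bar>B * lam^(min n m)\<bar> < \<epsilon>" using N by simp
      then show "d (x n) (y m) < \<epsilon>" using cb[of n m] by linarith
    qed
  qed (use xE yP in auto)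
  then obtain v u where cv: "conv_left E P d x v" and cu: "conv_right E P d y u"
    using assms(2) unfolding complete_bipolar_def convergent_bisequence_def by blast
  have vP: "v \<in> P" and uE: "u \<in> E" using cv cu unfolding conv_left_def conv_right_def by auto
  have xv: "(\<lambda>n. d (x n) v) \<longlonglongrightarrow> 0" using cv unfolding conv_left_def by auto
  have yu: "(\<lambda>n. d u (y n)) \<longlonglongrightarrow> 0" using cu unfolding conv_right_def by auto
  have xy: "(\<lambda>n. d (x n) (y n)) \<longlonglongrightarrow> 0"
  proof (rule tendsto_sandwich[OF _ _ tendsto_const lamlim])
    show "\<forall>\<^sub>F n in sequentially. 0 \<le> d (x n) (y n)" using dnn xE yP by auto
    show "\<forall>\<^sub>F n in sequentially. d (x n) (y n) \<le> B * lam^n" using cb[of n n for n] by auto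
  qed
  have "d u v \<le> 0"
  proof (rule tendsto_le[OF _ _ tendsto_const])
    show "(\<lambda>n. d u (y n) + d (x n) (y n) + d (x n) v) \<longlonglongrightarrow> 0"
      using tendsto_add[OF tendsto_add[OF yu xy] xv] by simp
    show "\<forall>\<^sub>F n in sequentially. d u v \<le> d u (y n) + d (x n) (y n) + d (x n) v"
      using quad uE xE yP vP by auto
  qed simp
  then have "u = v" using dnn[OF uE vP] d0[OF uE vP] by simp
  then have uP: "u \<in> P" using vP by simp
  have "conv_left E P d (\<lambda>n. F (x n)) (F u)"
    using assms(9) cv \<open>u = v\<close> unfolding bipolar_continuous_def by blast
  then have xFu: "(\<lambda>n. d (x (Suc n)) (F u)) \<longlonglongrightarrow> 0"
    unfolding conv_left_def x_def by simp
  have xu: "(\<lambda>n. d (x (Suc n)) u) \<longlonglongrightarrow> 0"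
    using LIMSEQ_Suc[OF xv] \<open>u = v\<close> by simp
  have FuP: "F u \<in> P" using FP uP by blast
  have "d u (F u) \<le> 0"
  proof (rule tendsto_le[OF _ _ tendsto_const])
    show "(\<lambda>n. d u u + d (x (Suc n)) u + d (x (Suc n)) (F u)) \<longlonglongrightarrow> 0"
      using tendsto_add[OF tendsto_add[OF tendsto_const[of 0] xu] xFu] d0[OF uE uP] by simp
    show "\<forall>\<^sub>F n in sequentially. d u (F u) \<le> d u u + d (x (Suc n)) u + d (x (Suc n)) (F u)"
      using quad uE xE uP FuP by auto
  qed simp
  then have fixu: "F u = u" using dnn[OF uE FuP] d0[OF uE FuP] by simp
  have zeroS: "\<And>e f. e \<in> E \<Longrightarrow> f \<in> P \<Longrightarrow> F e = e \<Longrightarrow> F f = f \<Longrightarrow> e = f"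
  proof -
    fix e f assume ef: "e \<in> E" "f \<in> P" and fe: "F e = e" "F f = f"
    have "S e f \<le> \<pi> * S e f" using assms(8)[OF ef] fe by (simp add: S_def)
    then have "S e f \<le> 0" using assms(5) Snn[OF ef]
      by (smt (verit) mult_le_cancel_right1)
    then have "Q * d e f ^ \<rho> \<le> 0" using Slow[OF ef] by linarith
    then have "d e f ^ \<rho> \<le> 0" using assms(12)
      by (simp add: mult_le_0_iff)
    then have "d e f = 0" using dnn[OF ef] rpos
      by (metis antisym zero_le_power power_eq_0_iff)
    then show "e = f" using d0[OF ef] by simp
  qed
  show ?thesis
  proof (rule ex1I[of _ u])
    show "u \<in> E \<union> P \<and> F u = u" using uE fixu by simp
    fix g assume g: "g \<in> E \<union> P \<and> F g = g"
    then show "g = u"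
    proof (cases "g \<in> E")
      case True then show ?thesis using zeroS[OF True uP] g fixu by simp
    next
      case False then have "g \<in> P" using g by simp
      then show ?thesis using zeroS[OF uE] g fixu by simp
    qed
  qed
qed

end
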